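(* For the process with internal state described in the context, define $c_S:=\|\nabla^2S\|_\infty$ and $$r(\epsilon):=c_\lambda\epsilon^{k\delta}+c_F\epsilon^{1+\delta}+c_S\epsilon^2,$$ and let $m(t):=t\tau_\epsilon-(\mathrm{Id}-e^{-t\tau_\epsilon^{-1}})\tau_\epsilon^2$, with derivative $m'(t)=\tau_\epsilon(\mathrm{Id}-e^{-t\tau_\epsilon^{-1}})$. Then, for every $n\ge0$, the jump time difference $\Delta T_{n+1}:=T_{n+1}-T_n$ satisfies $$\theta_{n+1}=\lambda_0\Delta T_{n+1}-b^Tm'(\Delta T_{n+1})Z_{T_n}-\epsilon\, b^Tm(\Delta T_{n+1})\nabla S(X_{T_n})\mathcal V_n+(\theta_{n+1}^3+\theta_{n+1})\,\mathcal{O}(r(\epsilon)).$$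
   Context: Model. Let $d,n\ge1$, $\epsilon>0$. $S:\mathbb{R}^d\to\mathbb{R}^n$ is smooth and bounded with bounded first and second derivatives; $\nabla S(x)\in\mathbb{R}^{n\times d}$ is its Jacobian. $\mathcal M$ is a centered probability measure on $\mathbb{S}^{d-1}$. The rate $\lambda:\mathbb{R}^n\to\mathbb{R}$ is smooth with $0<\lambda_{\min}\le\lambda\le\lambda_{\max}$ and $\lambda(z)=\lambda_0-b^Tz+c_\lambda\mathcal{O}(|z|^k)$, $k\ge2$, $b\in\mathbb{R}^n$. $(\theta_n)_{n\ge1}$ i.i.d. mean-1 exponential, $(\mathcal V_n)_{n\ge0}$ i.i.d. with law $\mathcal M$, independent. Process: $T_0=0$, $\frac{\mathrm{d}X_t}{\mathrm{d}t}=\epsilon V_t$, $\frac{\mathrm{d}Y_t}{\mathrm{d}t}=F_\epsilon(Y_t,S(X_t))$, $Z_t:=S(X_t)-Y_t$, $\int_{T_n}^{T_{n+1}}\lambda(Z_t)\mathrm{d}t=\theta_{n+1}$, $V_t=\mathcal V_n$ on $[T_n,T_{n+1})$. Notation: $\mathcal{O}(\cdot)$ is a deterministic globally Lipschitz function vanishing at $0$ with Lipschitz constant uniform in $\epsilon$; $C$ denotes constants independent of $\epsilon$. Fix $\delta>1/k$. Assumptions: (A1) $F_\epsilon(y,s)=-\tau_\epsilon^{-1}(y-s)+\epsilon^{1-\delta}c_F\mathcal{O}(|s-y|^2)$, $\tau_\epsilon$ invertible constant $n\times n$ matrix. (A2) $\|e^{-t\tau_\epsilon^{-1}}\|\le Ce^{-t\epsilon^{1-\delta}/C}$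 for $t\ge0$. (A3) $\sup_{t\ge0}\|t\tau_\epsilon^{-1}e^{-t\tau_\epsilon^{-1}}\|\le C\epsilon^{-1}$. (A4) For any process $S_t$ with $\sup_t|\mathrm{d}S_t/\mathrm{d}t|=\mathcal{O}(\epsilon)$ and $|S_0-Y_0|=\mathcal{O}(\epsilon^\delta)$, the solution of $\mathrm{d}Y_t/\mathrm{d}t=F_\epsilon(Y_t,S_t)$ satisfies $\sup_t|Y_t-S_t|=\mathcal{O}(\epsilon^\delta)$. Initial conditions: $|Z_0|=\mathcal{O}(\epsilon^\delta)$, $|\tau_\epsilon^{-1}Z_0|=\mathcal{O}(1)$. *)

theory Defs
  imports "HOL-Analysis.Analysis"
begin

primrec matpow :: "real^'n^'n \<Rightarrow> nat \<Rightarrow> real^'n^'n" where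
  "matpow A 0 = mat 1"
| "matpow A (Suc k) = A ** matpow A k"

definition mexp :: "real^'n^'n \<Rightarrow> real^'n^'n" where
  "mexp A = (\<Sum>k. (1 / fact k) *\<^sub>R matpow A k)"

definition opnorm :: "real^'m^'n \<Rightarrow> real" where
  "opnorm A = onorm (\<lambda>x. A *v x)"

fun iter_dir :: "'a::real_normed_vector list \<Rightarrow> ('a \<Rightarrow> 'b::real_normed_vector) \<Rightarrow> 'a \<Rightarrow> 'b" where
  "iter_dir [] f = f"
| "iter_dir (v # vs) f = (\<lambda>x. vector_derivative (\<lambda>s::real. iter_dir vs f (x + s *\<^sub>R v)) (at 0))"

definition smooth_map :: "('a::euclidean_space \<Rightarrow> 'b::euclidean_space) \<Rightarrow> bool" where
  "smooth_map f \<longleftrightarrow>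
     (\<forall>vs. continuous_on UNIV (iter_dir vs f)) \<and>
     (\<forall>vs v x. ((\<lambda>s::real. iter_dir vs f (x + s *\<^sub>R v))
                  has_vector_derivative iter_dir (v # vs) f x) (at 0))"

definition mfun :: "real^'n^'n \<Rightarrow> real \<Rightarrow> real^'n^'n" where
  "mfun \<tau> t = t *\<^sub>R \<tau> - (mat 1 - mexp (- (t *\<^sub>R matrix_inv \<tau>))) ** \<tau> ** \<tau>"

definition dmfun :: "real^'n^'n \<Rightarrow> real \<Rightarrow> real^'n^'n" where
  "dmfun \<tau> t = \<tau> ** (mat 1 - mexp (- (t *\<^sub>R matrix_inv \<tau>)))"

text \<open>One realisation of the process for a given epsilon:
  jump times T, velocities Vs (Vs n = script-V_n), exponential clocks th (th (Suc n) = theta_{n+1}),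
  positions X and internal state Y.  Z t = S (X t) - Y t.\<close>
definition is_path ::
  "real \<Rightarrow> (real^'d::finite \<Rightarrow> real^'n::finite) \<Rightarrow> (real^'n \<Rightarrow> real^'n \<Rightarrow> real^'n)
   \<Rightarrow> (real^'n \<Rightarrow> real) \<Rightarrow> (nat \<Rightarrow> real) \<Rightarrow> (nat \<Rightarrow> real^'d) \<Rightarrow> (nat \<Rightarrow> real)
   \<Rightarrow> (real \<Rightarrow> real^'d) \<Rightarrow> (real \<Rightarrow> real^'n) \<Rightarrow> bool" where
  "is_path \<epsilon> S F lam th Vs T X Y \<longleftrightarrow>
     T 0 = 0 \<and> filterlim T at_top sequentially \<and>
     (\<forall>n. th (Suc n) > 0) \<and>
     (\<forall>n. norm (Vs n) = 1) \<and>
     (\<forall>n. T n < T (Suc n)) \<and>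
     (\<forall>n. \<forall>t\<in>{T n..T (Suc n)}.
          (X has_vector_derivative (\<epsilon> *\<^sub>R Vs n)) (at t within {T n..T (Suc n)})) \<and>
     (\<forall>t\<ge>0. (Y has_vector_derivative F (Y t) (S (X t))) (at t within {0..})) \<and>
     (\<forall>n. ((\<lambda>t. lam (S (X t) - Y t)) has_integral th (Suc n)) {T n..T (Suc n)})"

end

theory Submission
  imports Defs
begin


typedef ('n::finite) sqm = "UNIV :: (real^'n^'n) set" by simp

setup_lifting type_definition_sqm

lemma mm_add_rdistrib: "((A::real^'n^'m) + B) ** (C::real^'p^'n) = A ** C + B ** C"
  by (vector matrix_matrix_mult_def sum.distrib[symmetric] field_simps)
lemma mm_scaleR_left: "(a *\<^sub>R (A::real^'n^'m)) ** (C::real^'p^'n) = a *\<^sub>R (A ** C)"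
  by (vector matrix_matrix_mult_def sum_distrib_left field_simps)
lemma mm_scaleR_right: "(A::real^'n^'m) ** (a *\<^sub>R (C::real^'p^'n)) = a *\<^sub>R (A ** C)"
  by (vector matrix_matrix_mult_def sum_distrib_left field_simps)

instantiation sqm :: (finite) ring_1
begin
lift_definition zero_sqm :: "'a sqm" is "0" .
lift_definition one_sqm :: "'a sqm" is "mat 1" .
lift_definition plus_sqm :: "'a sqm \<Rightarrow> 'a sqm \<Rightarrow> 'a sqm" is "(+)" .
lift_definition minus_sqm :: "'a sqm \<Rightarrow> 'a sqm \<Rightarrow> 'a sqm" is "(-)" .
lift_definition uminus_sqm :: "'a sqm \<Rightarrow> 'a sqm" is "uminus" .
lift_definition times_sqm :: "'a sqm \<Rightarrow> 'a sqm \<Rightarrow> 'a sqm" is "(**)" .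
instance
proof
  fix a b c :: "'a sqm"
  show "a * b * c = a * (b * c)" by transfer (simp add: matrix_mul_assoc)
  show "1 * a = a" by transfer simp
  show "a * 1 = a" by transfer simp
  show "(a + b) * c = a * c + b * c" by transfer (simp add: mm_add_rdistrib)
  show "a * (b + c) = a * b + a * c" by transfer (simp add: matrix_add_ldistrib)
  show "a + b + c = a + (b + c)" by transfer simp
  show "a + b = b + a" by transfer simp
  show "0 + a = a" by transfer simp
  show "- a + a = 0" by transfer simp
  show "a - b = a + - b" by transfer simp
  show "(0::'a sqm) \<noteq> 1"
  proof transfer
    show "(0::real^'a^'a) \<noteq> mat 1"
      proof
      assume h: "(0::real^'a^'a) = mat 1"
      obtain i :: 'a where True by simp
      have "(0::real^'a^'a) $ i $ i = mat 1 $ i $ i" using h by simp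
      thus False by (simp add: mat_def)
    qed
  qed
qed
end

instantiation sqm :: (finite) real_algebra_1
begin
lift_definition scaleR_sqm :: "real \<Rightarrow> 'a sqm \<Rightarrow> 'a sqm" is "scaleR" .
instance
proof
  fix a b :: real and x y :: "'a sqm"
  show "a *\<^sub>R (x + y) = a *\<^sub>R x + a *\<^sub>R y" by transfer (simp add: scaleR_right_distrib)
  show "(a + b) *\<^sub>R x = a *\<^sub>R x + b *\<^sub>R x" by transfer (simp add: scaleR_left_distrib)
  show "a *\<^sub>R b *\<^sub>R x = (a * b) *\<^sub>R x" by transfer simp
  show "1 *\<^sub>R x = x" by transfer simp
  show "a *\<^sub>R x * y = a *\<^sub>R (x * y)" by transfer (simp add: mm_scaleR_left)
  show "x * a *\<^sub>R y = a *\<^sub>R (x * y)" by transfer (simp add: mm_scaleR_right)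
qed
end


definition mnorm :: "real^'n^'m \<Rightarrow> real" where "mnorm M = onorm ((*v) M)"

lemma mnorm_ge0: "0 \<le> mnorm M"
  unfolding mnorm_def by (rule onorm_pos_le) simp

lemma mnorm_eq0: "mnorm (M::real^'n^'m) = 0 \<longleftrightarrow> M = 0"
  unfolding mnorm_def
  by (subst onorm_eq_0) (auto simp: matrix_eq)

lemma mnorm_triangle: "mnorm ((M::real^'n^'m) + N) \<le> mnorm M + mnorm N"
proof -
  have "(*v) (M+N) = (\<lambda>x. M *v x + N *v x)" by (rule ext) (simp add: matrix_vector_mult_add_rdistrib)
  thus ?thesis using onorm_triangle[OF matrix_vector_mul_bounded_linear matrix_vector_mul_bounded_linear, of M N]
    by (simp add: mnorm_def)
qed

lemma mnorm_scaleR: "mnorm (a *\<^sub>R (M::real^'n^'m)) = \<bar>a\<bar> * mnorm M"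
  unfolding mnorm_def
  using onorm_scaleR[OF matrix_vector_mul_bounded_linear, of a M]
  by (simp add: scaleR_matrix_vector_assoc)

lemma mnorm_mult: "mnorm ((M::real^'n^'m) ** (N::real^'p^'n)) \<le> mnorm M * mnorm N"
  unfolding mnorm_def
  using onorm_compose[OF matrix_vector_mul_bounded_linear matrix_vector_mul_bounded_linear, of M N]
  by (simp add: o_def matrix_vector_mul_assoc)

lemma mnorm_one: "mnorm (mat 1 :: real^'n^'n) = 1"
proof -
  have "(*v) (mat 1 :: real^'n^'n) = (\<lambda>x. x)" by (rule ext) simp
  thus ?thesis unfolding mnorm_def using onorm_id by simp
qed

lemma mnorm_apply: "norm ((M::real^'n^'m) *v x) \<le> mnorm M * norm x"
  unfolding mnorm_def by (rule onorm) simp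

instantiation sqm :: (finite) real_normed_algebra_1
begin
lift_definition norm_sqm :: "'a sqm \<Rightarrow> real" is mnorm .
definition dist_sqm :: "'a sqm \<Rightarrow> 'a sqm \<Rightarrow> real" where "dist_sqm x y = norm (x - y)"
definition sgn_sqm :: "'a sqm \<Rightarrow> 'a sqm" where "sgn_sqm x = x /\<^sub>R norm x"
definition uniformity_sqm :: "('a sqm \<times> 'a sqm) filter" where
  "uniformity_sqm = (INF e\<in>{0 <..}. principal {(x, y). dist x y < e})"
definition open_sqm :: "'a sqm set \<Rightarrow> bool" where
  "open_sqm U \<longleftrightarrow> (\<forall>x\<in>U. eventually (\<lambda>(x', y). x' = x \<longrightarrow> y \<in> U) uniformity)"
instance
proof
  fix x y :: "'a sqm" and a :: real and U :: "'a sqm set"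
  show "dist x y = norm (x - y)" by (simp add: dist_sqm_def)
  show "sgn x = x /\<^sub>R norm x" by (simp add: sgn_sqm_def)
  show "(uniformity :: ('a sqm \<times> 'a sqm) filter) = (INF e\<in>{0 <..}. principal {(x, y). dist x y < e})"
    by (simp add: uniformity_sqm_def)
  show "open U \<longleftrightarrow> (\<forall>x\<in>U. eventually (\<lambda>(x', y). x' = x \<longrightarrow> y \<in> U) uniformity)"
    by (simp add: open_sqm_def)
  show "(norm x = 0) = (x = 0)" by transfer (rule mnorm_eq0)
  show "norm (x + y) \<le> norm x + norm y" by transfer (rule mnorm_triangle)
  show "norm (a *\<^sub>R x) = \<bar>a\<bar> * norm x" by transfer (rule mnorm_scaleR)
  show "norm (x * y) \<le> norm x * norm y" by transfer (rule mnorm_mult)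
  show "norm (1::'a sqm) = 1" by transfer (rule mnorm_one)
qed
end


lemma vnorm_le_mnorm: "norm (M::real^'n^'m) \<le> real CARD('m) * real CARD('n) * mnorm M"
proof -
  have "norm M = L2_set (\<lambda>i. norm (M$i)) UNIV" by (simp add: norm_vec_def)
  also have "\<dots> \<le> (\<Sum>i\<in>UNIV. norm (M$i))" by (rule L2_set_le_sum) simp
  also have "\<dots> \<le> (\<Sum>i\<in>(UNIV::'m set). \<Sum>j\<in>(UNIV::'n set). \<bar>M$i$j\<bar>)"
    by (rule sum_mono) (rule norm_le_l1_cart)
  also have "\<dots> \<le> (\<Sum>i\<in>(UNIV::'m set). \<Sum>j\<in>(UNIV::'n set). mnorm M)"
    by (intro sum_mono) (simp add: mnorm_def matrix_component_le_onorm)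
  also have "\<dots> = real CARD('m) * real CARD('n) * mnorm M" by simp
  finally show ?thesis .
qed

lemma mnorm_le_vnorm: "mnorm (M::real^'n^'m) \<le> real CARD('m) * real CARD('n) * norm M"
  unfolding mnorm_def
proof (rule onorm_le_matrix_component)
  fix i j
  have "\<bar>M$i$j\<bar> \<le> norm (M$i)" by (rule component_le_norm_cart)
  also have "\<dots> \<le> norm M" using Finite_Cartesian_Product.norm_nth_le[of M i] by simp
  finally show "\<bar>M$i$j\<bar> \<le> norm M" .
qed

instance sqm :: (finite) banach
proof
  fix X :: "nat \<Rightarrow> 'a sqm"
  assume cX: "Cauchy X"
  define K where "K = real CARD('a) * real CARD('a)"
  have K1: "K > 0" unfolding K_def by simp
  have dR: "dist (Rep_sqm x) (Rep_sqm y) \<le> K * dist x y" for x y :: "'a sqm"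
    using vnorm_le_mnorm[of "Rep_sqm x - Rep_sqm y"]
    by (simp add: dist_norm K_def norm_sqm.rep_eq minus_sqm.rep_eq)
  have dR2: "dist x y \<le> K * dist (Rep_sqm x) (Rep_sqm y)" for x y :: "'a sqm"
    using mnorm_le_vnorm[of "Rep_sqm x - Rep_sqm y"]
    by (simp add: dist_norm K_def norm_sqm.rep_eq minus_sqm.rep_eq)
  have "Cauchy (\<lambda>n. Rep_sqm (X n))"
  proof (rule metric_CauchyI)
    fix e :: real assume e: "e > 0"
    then obtain M where M: "\<forall>m\<ge>M. \<forall>n\<ge>M. dist (X m) (X n) < e / K"
      using metric_CauchyD[OF cX, of "e/K"] K1 by auto
    show "\<exists>M. \<forall>m\<ge>M. \<forall>n\<ge>M. dist (Rep_sqm (X m)) (Rep_sqm (X n)) < e"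
    proof (intro exI allI impI)
      fix m n assume "M \<le> m" "M \<le> n"
      hence "dist (X m) (X n) < e / K" using M by auto
      hence "K * dist (X m) (X n) < e" using K1 by (simp add: field_simps)
      thus "dist (Rep_sqm (X m)) (Rep_sqm (X n)) < e" using dR[of "X m" "X n"] by linarith
    qed
  qed
  then obtain L where L: "(\<lambda>n. Rep_sqm (X n)) \<longlonglongrightarrow> L"
    using Cauchy_convergent convergent_def by blast
  have "X \<longlonglongrightarrow> Abs_sqm L"
  proof (rule tendstoI)
    fix e :: real assume e: "e > 0"
    have "\<forall>\<^sub>F n in sequentially. dist (Rep_sqm (X n)) L < e / K"
      using tendstoD[OF L, of "e/K"] e K1 by simp
    thus "\<forall>\<^sub>F n in sequentially. dist (X n) (Abs_sqm L) < e"
    proof eventually_elim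
      case (elim n)
      have "dist (X n) (Abs_sqm L) \<le> K * dist (Rep_sqm (X n)) L"
        using dR2[of "X n" "Abs_sqm L"] by (simp add: Abs_sqm_inverse)
      also have "\<dots> < e" using elim K1 by (simp add: field_simps)
      finally show ?case .
    qed
  qed
  thus "convergent X" by (auto simp: convergent_def)
qed


lemma bl_Rep: "bounded_linear (Rep_sqm :: 'n::finite sqm \<Rightarrow> real^'n^'n)"
proof (rule bounded_linear_intro[where K="real CARD('n) * real CARD('n)"])
  fix x y :: "'n sqm" and r :: real
  show "Rep_sqm (x + y) = Rep_sqm x + Rep_sqm y" by (simp add: plus_sqm.rep_eq)
  show "Rep_sqm (r *\<^sub>R x) = r *\<^sub>R Rep_sqm x" by (simp add: scaleR_sqm.rep_eq)
  show "norm (Rep_sqm x) \<le> norm x * (real CARD('n) * real CARD('n))"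
    using vnorm_le_mnorm[of "Rep_sqm x"] by (simp add: norm_sqm.rep_eq mult.commute)
qed

lemma Rep_pow: "Rep_sqm (x ^ k) = matpow (Rep_sqm x) k"
  by (induct k) (simp_all add: one_sqm.rep_eq times_sqm.rep_eq)

lemma mexp_exp: "mexp A = Rep_sqm (exp (Abs_sqm A))"
proof -
  have s: "summable (\<lambda>n. Abs_sqm A ^ n /\<^sub>R fact n)" by (rule summable_exp_generic)
  have "Rep_sqm (exp (Abs_sqm A)) = (\<Sum>n. Rep_sqm (Abs_sqm A ^ n /\<^sub>R fact n))"
    unfolding exp_def by (rule bounded_linear.suminf[OF bl_Rep s])
  also have "\<dots> = mexp A"
    unfolding mexp_def
    by (simp add: scaleR_sqm.rep_eq Rep_pow Abs_sqm_inverse divide_inverse_commute)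
  finally show ?thesis by simp
qed

lemma Abs_neg_scale: "Abs_sqm (- (u *\<^sub>R A)) = u *\<^sub>R (- Abs_sqm A)"
  by (simp add: Rep_sqm_inject[symmetric] Abs_sqm_inverse scaleR_sqm.rep_eq uminus_sqm.rep_eq)

lemma mexp_zero: "mexp (- (0 *\<^sub>R A)) = mat 1"
  by (simp add: mexp_exp Abs_neg_scale one_sqm.rep_eq zero_sqm.abs_eq[symmetric])

lemma mexp_comm: "mexp (- (u *\<^sub>R A)) ** A = A ** mexp (- (u *\<^sub>R A))"
proof -
  have "exp (u *\<^sub>R (- Abs_sqm A)) * (- Abs_sqm A) = (- Abs_sqm A) * exp (u *\<^sub>R (- Abs_sqm A))"
    by (rule exp_times_scaleR_commute)
  hence "exp (u *\<^sub>R (- Abs_sqm A)) * Abs_sqm A = Abs_sqm A * exp (u *\<^sub>R (- Abs_sqm A))"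
    by simp
  hence "Rep_sqm (exp (u *\<^sub>R (- Abs_sqm A)) * Abs_sqm A) = Rep_sqm (Abs_sqm A * exp (u *\<^sub>R (- Abs_sqm A)))"
    by simp
  thus ?thesis by (simp add: mexp_exp Abs_neg_scale times_sqm.rep_eq Abs_sqm_inverse)
qed

lemma mexp_deriv:
  "((\<lambda>u. mexp (- (u *\<^sub>R A))) has_vector_derivative (- (A ** mexp (- (u *\<^sub>R A))))) (at u within S)"
proof -
  have "((\<lambda>u. exp (u *\<^sub>R (- Abs_sqm A))) has_vector_derivative
        exp (u *\<^sub>R (- Abs_sqm A)) * (- Abs_sqm A)) (at u within S)"
    by (rule exp_scaleR_has_vector_derivative_right)
  from bounded_linear.has_vector_derivative[OF bl_Rep this]
  have "((\<lambda>u. mexp (- (u *\<^sub>R A))) has_vector_derivative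
         Rep_sqm (exp (u *\<^sub>R (- Abs_sqm A)) * (- Abs_sqm A))) (at u within S)"
    by (simp add: mexp_exp Abs_neg_scale)
  moreover have "Rep_sqm (exp (u *\<^sub>R (- Abs_sqm A)) * (- Abs_sqm A)) = - (A ** mexp (- (u *\<^sub>R A)))"
    using mexp_comm[of u A]
    by (simp add: mexp_exp Abs_neg_scale times_sqm.rep_eq uminus_sqm.rep_eq Abs_sqm_inverse)
  ultimately show ?thesis by simp
qed

lemma opnorm_mnorm: "opnorm A = mnorm A"
  by (simp add: opnorm_def mnorm_def)

lemma bb_mv: "bounded_bilinear (\<lambda>(M::real^'n^'m) (v::real^'n). M *v v)"
proof (rule bounded_bilinear.intro)
  fix a a' :: "real^'n^'m" and b b' :: "real^'n" and r :: real
  show "(a + a') *v b = a *v b + a' *v b" by (simp add: matrix_vector_mult_add_rdistrib)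
  show "a *v (b + b') = a *v b + a *v b'" by (simp add: matrix_vector_right_distrib)
  show "(r *\<^sub>R a) *v b = r *\<^sub>R (a *v b)" by (simp add: scaleR_matrix_vector_assoc)
  show "a *v (r *\<^sub>R b) = r *\<^sub>R (a *v b)" by (simp add: matrix_vector_mult_scaleR)
  show "\<exists>K. \<forall>a b. norm ((a::real^'n^'m) *v b) \<le> norm a * norm b * K"
  proof (intro exI allI)
    fix a :: "real^'n^'m" and b :: "real^'n"
    have "norm (a *v b) \<le> mnorm a * norm b" by (rule mnorm_apply)
    also have "\<dots> \<le> (real CARD('m) * real CARD('n) * norm a) * norm b"
      by (rule mult_right_mono[OF mnorm_le_vnorm]) simp
    finally show "norm (a *v b) \<le> norm a * norm b * (real CARD('m) * real CARD('n))"
      by (simp add: ac_simps)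
  qed
qed

lemma bl_mm_left: "bounded_linear (\<lambda>(B::real^'n^'n). (T::real^'n^'n) ** B)"
proof (rule bounded_linear_intro[where K="real CARD('n) * real CARD('n) * (mnorm T * (real CARD('n) * real CARD('n)))"])
  fix x y :: "real^'n^'n" and r :: real
  show "T ** (x + y) = T ** x + T ** y" by (simp add: matrix_add_ldistrib)
  show "T ** (r *\<^sub>R x) = r *\<^sub>R (T ** x)" by (simp add: mm_scaleR_right)
  have "norm (T ** x) \<le> real CARD('n) * real CARD('n) * mnorm (T ** x)" by (rule vnorm_le_mnorm)
  also have "\<dots> \<le> real CARD('n) * real CARD('n) * (mnorm T * mnorm x)"
    by (rule mult_left_mono[OF mnorm_mult]) simp
  also have "\<dots> \<le> real CARD('n) * real CARD('n) * (mnorm T * (real CARD('n) * real CARD('n) * norm x))"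
    by (intro mult_left_mono mnorm_le_vnorm mnorm_ge0) simp_all
  finally show "norm (T ** x) \<le> norm x * (real CARD('n) * real CARD('n) * (mnorm T * (real CARD('n) * real CARD('n))))"
    by (simp add: ac_simps)
qed

lemma bl_mm_right: "bounded_linear (\<lambda>(B::real^'n^'n). B ** (T::real^'n^'n))"
proof (rule bounded_linear_intro[where K="real CARD('n) * real CARD('n) * (mnorm T * (real CARD('n) * real CARD('n)))"])
  fix x y :: "real^'n^'n" and r :: real
  show "(x + y) ** T = x ** T + y ** T" by (simp add: mm_add_rdistrib)
  show "(r *\<^sub>R x) ** T = r *\<^sub>R (x ** T)" by (simp add: mm_scaleR_left)
  have "norm (x ** T) \<le> real CARD('n) * real CARD('n) * mnorm (x ** T)" by (rule vnorm_le_mnorm)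
  also have "\<dots> \<le> real CARD('n) * real CARD('n) * (mnorm x * mnorm T)"
    by (rule mult_left_mono[OF mnorm_mult]) simp
  also have "\<dots> \<le> real CARD('n) * real CARD('n) * ((real CARD('n) * real CARD('n) * norm x) * mnorm T)"
    by (intro mult_left_mono mult_right_mono mnorm_le_vnorm mnorm_ge0) simp_all
  finally show "norm (x ** T) \<le> norm x * (real CARD('n) * real CARD('n) * (mnorm T * (real CARD('n) * real CARD('n))))"
    by (simp add: ac_simps)
qed


lemma minv: "invertible (T::real^'n^'n) \<Longrightarrow> T ** matrix_inv T = mat 1 \<and> matrix_inv T ** T = mat 1"
  unfolding invertible_def matrix_inv_def by (rule someI_ex)

lemma mm_diff_ldistrib: "(A::real^'n^'m) ** (B - C) = A ** B - A ** (C::real^'p^'n)"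
  by (vector matrix_matrix_mult_def sum_subtractf[symmetric] field_simps)
lemma mm_diff_rdistrib: "((A::real^'n^'m) - B) ** (C::real^'p^'n) = A ** C - B ** C"
  by (vector matrix_matrix_mult_def sum_subtractf[symmetric] field_simps)
lemma mv_diff_rdistrib: "((A::real^'n^'m) - B) *v x = A *v x - B *v x"
  by (simp add: matrix_vector_mult_diff_rdistrib)
lemma mm_neg_left: "(- (A::real^'n^'m)) ** (B::real^'p^'n) = - (A ** B)"
  by (vector matrix_matrix_mult_def sum_negf[symmetric])
lemma mv_neg: "(- (A::real^'n^'m)) *v x = - (A *v x)"
  by (vector matrix_vector_mult_def sum_negf[symmetric])

lemma E_tau_comm:
  assumes "invertible (T::real^'n^'n)"
  shows "mexp (- (u *\<^sub>R matrix_inv T)) ** T = T ** mexp (- (u *\<^sub>R matrix_inv T))"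
proof -
  let ?A = "matrix_inv T" let ?E = "mexp (- (u *\<^sub>R matrix_inv T))"
  have TA: "T ** ?A = mat 1" and AT: "?A ** T = mat 1" using minv[OF assms] by auto
  have "?E ** T = (T ** ?A) ** ?E ** T" using TA by simp
  also have "\<dots> = T ** (?A ** ?E) ** T" by (simp add: matrix_mul_assoc)
  also have "\<dots> = T ** (?E ** ?A) ** T" by (simp add: mexp_comm)
  also have "\<dots> = T ** ?E ** (?A ** T)" by (simp add: matrix_mul_assoc)
  also have "\<dots> = T ** ?E" using AT by simp
  finally show ?thesis .
qed

lemma dmfun_A:
  assumes "invertible (T::real^'n^'n)"
  shows "dmfun T u ** matrix_inv T = mat 1 - mexp (- (u *\<^sub>R matrix_inv T))"
proof -
  let ?A = "matrix_inv T" let ?E = "mexp (- (u *\<^sub>R matrix_inv T))"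
  have TA: "T ** ?A = mat 1" using minv[OF assms] by auto
  have "dmfun T u ** ?A = T ** ?A - T ** ?E ** ?A"
    by (simp add: dmfun_def mm_diff_ldistrib mm_diff_rdistrib)
  also have "T ** ?E ** ?A = T ** ?A ** ?E" by (simp add: matrix_mul_assoc[symmetric] mexp_comm)
  finally show ?thesis using TA by simp
qed

lemma E_deriv_rev:
  "((\<lambda>s. mexp (- ((t1 - s) *\<^sub>R A))) has_vector_derivative (A ** mexp (- ((t1 - s) *\<^sub>R A)))) (at s within S)"
proof -
  have d1: "((\<lambda>s. t1 - s) has_vector_derivative (-1)) (at s within S)"
    by (auto intro!: derivative_eq_intros simp: has_real_derivative_iff_has_vector_derivative[symmetric])
  from vector_diff_chain_within[OF d1 mexp_deriv]
  show ?thesis by (simp add: o_def)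
qed

lemma phi_deriv:
  fixes T :: "real^'n^'n" and Z G :: "real \<Rightarrow> real^'n" and b W :: "real^'n"
  assumes inv: "invertible T"
    and Zd: "(Z has_vector_derivative (G s - matrix_inv T *v Z s)) (at s within S)"
  shows "((\<lambda>s. b \<bullet> (dmfun T (t1 - s) *v Z s) + e * (b \<bullet> (mfun T (t1 - s) *v W))) has_vector_derivative
     (- (b \<bullet> Z s) + b \<bullet> (dmfun T (t1 - s) *v (G s - e *\<^sub>R W)))) (at s within S)"
proof -
  let ?A = "matrix_inv T"
  define E where "E = (\<lambda>s. mexp (- ((t1 - s) *\<^sub>R ?A)))"
  have TA: "T ** ?A = mat 1" and AT: "?A ** T = mat 1" using minv[OF inv] by auto
  have dE: "(E has_vector_derivative (?A ** E s)) (at s within S)"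
    unfolding E_def by (rule E_deriv_rev)
  have dM0: "((\<lambda>s. T ** (mat 1 - E s)) has_vector_derivative T ** (0 - ?A ** E s)) (at s within S)"
    by (rule bounded_linear.has_vector_derivative[OF bl_mm_left])
       (intro has_vector_derivative_diff has_vector_derivative_const dE)
  have dM: "((\<lambda>s. dmfun T (t1 - s)) has_vector_derivative (- E s)) (at s within S)"
  proof -
    have "T ** (0 - ?A ** E s) = - E s"
      by (simp add: matrix_mul_assoc TA mm_diff_ldistrib[of T 0 "?A ** E s", simplified])
    thus ?thesis using dM0 by (simp add: dmfun_def E_def)
  qed
  have dm0: "((\<lambda>s. (t1 - s) *\<^sub>R T - (mat 1 - E s) ** T ** T) has_vector_derivative
          ((-1) *\<^sub>R T - (0 - ?A ** E s) ** T ** T)) (at s within S)"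
  proof (intro has_vector_derivative_diff)
    show "((\<lambda>s. (t1 - s) *\<^sub>R T) has_vector_derivative (-1) *\<^sub>R T) (at s within S)"
      by (auto intro!: derivative_eq_intros)
    have "((\<lambda>s. (mat 1 - E s) ** T) has_vector_derivative (0 - ?A ** E s) ** T) (at s within S)"
      by (rule bounded_linear.has_vector_derivative[OF bl_mm_right])
         (intro has_vector_derivative_diff has_vector_derivative_const dE)
    thus "((\<lambda>s. (mat 1 - E s) ** T ** T) has_vector_derivative (0 - ?A ** E s) ** T ** T) (at s within S)"
      by (rule bounded_linear.has_vector_derivative[OF bl_mm_right])
  qed
  have dm: "((\<lambda>s. mfun T (t1 - s)) has_vector_derivative (- dmfun T (t1 - s))) (at s within S)"
  proof -
    have ET: "E s ** T = T ** E s" unfolding E_def by (rule E_tau_comm[OF inv])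
    have "(0 - ?A ** E s) ** T ** T = - (E s ** (?A ** T) ** T)"
      by (simp add: mm_neg_left matrix_mul_assoc mexp_comm E_def)
    also have "\<dots> = - (T ** E s)" using AT ET by simp
    finally have "(-1) *\<^sub>R T - (0 - ?A ** E s) ** T ** T = - (T - T ** E s)" by simp
    also have "\<dots> = - dmfun T (t1 - s)" by (simp add: dmfun_def mm_diff_ldistrib E_def)
    finally show ?thesis using dm0 by (simp add: mfun_def E_def)
  qed
  have bbi: "bounded_bilinear (\<lambda>(x::real^'n) y. x \<bullet> y)" by (rule bounded_bilinear_inner)
  have d1: "((\<lambda>s. dmfun T (t1 - s) *v Z s) has_vector_derivative
          (dmfun T (t1 - s) *v (G s - ?A *v Z s) + (- E s) *v Z s)) (at s within S)"
    using bounded_bilinear.has_vector_derivative[OF bb_mv dM Zd] by simp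
  have d2: "((\<lambda>s. mfun T (t1 - s) *v W) has_vector_derivative ((- dmfun T (t1 - s)) *v W)) (at s within S)"
    using bounded_bilinear.has_vector_derivative[OF bb_mv dm has_vector_derivative_const[of W]] by simp
  have d3: "((\<lambda>s. b \<bullet> (dmfun T (t1 - s) *v Z s) + e * (b \<bullet> (mfun T (t1 - s) *v W))) has_vector_derivative
          (b \<bullet> (dmfun T (t1 - s) *v (G s - ?A *v Z s) + (- E s) *v Z s) + e * (b \<bullet> ((- dmfun T (t1 - s)) *v W)))) (at s within S)"
  proof (intro has_vector_derivative_add)
    show "((\<lambda>s. b \<bullet> (dmfun T (t1 - s) *v Z s)) has_vector_derivative
          b \<bullet> (dmfun T (t1 - s) *v (G s - ?A *v Z s) + (- E s) *v Z s)) (at s within S)"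
      using bounded_linear.has_vector_derivative[OF bounded_linear_inner_right d1] .
    have "((\<lambda>s. b \<bullet> (mfun T (t1 - s) *v W)) has_vector_derivative b \<bullet> ((- dmfun T (t1 - s)) *v W)) (at s within S)"
      using bounded_linear.has_vector_derivative[OF bounded_linear_inner_right d2] .
    thus "((\<lambda>s. e * (b \<bullet> (mfun T (t1 - s) *v W))) has_vector_derivative e * (b \<bullet> ((- dmfun T (t1 - s)) *v W))) (at s within S)"
      using bounded_linear.has_vector_derivative[OF bounded_linear_mult_right[of e]] by simp
  qed
  have MA: "dmfun T (t1 - s) *v (?A *v Z s) = Z s - E s *v Z s"
    by (simp add: matrix_vector_mul_assoc dmfun_A[OF inv] E_def mv_diff_rdistrib)
  have "b \<bullet> (dmfun T (t1 - s) *v (G s - ?A *v Z s) + (- E s) *v Z s) + e * (b \<bullet> ((- dmfun T (t1 - s)) *v W))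
      = - (b \<bullet> Z s) + b \<bullet> (dmfun T (t1 - s) *v (G s - e *\<^sub>R W))"
    by (simp add: matrix_vector_right_distrib matrix_vector_mult_diff_distrib MA mv_neg
        matrix_vector_mult_scaleR inner_diff_right inner_add_right)
  thus ?thesis using d3 by simp
qed


lemma vd_bound:
  fixes f :: "real \<Rightarrow> 'b::real_normed_vector"
  assumes "a \<le> b"
    and d: "\<And>x. x \<in> {a..b} \<Longrightarrow> (f has_vector_derivative f' x) (at x within {a..b})"
    and B: "\<And>x. x \<in> {a..b} \<Longrightarrow> norm (f' x) \<le> B"
  shows "norm (f b - f a) \<le> B * (b - a)"
proof -
  have "norm (f b - f a) \<le> B * norm (b - a)"
  proof (rule differentiable_bound[where S="{a..b}" and f'="\<lambda>x h. h *\<^sub>R f' x"])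
    show "convex {a..b}" by simp
    show "(f has_derivative (\<lambda>h. h *\<^sub>R f' x)) (at x within {a..b})" if "x \<in> {a..b}" for x
      using d[OF that] by (simp add: has_vector_derivative_def)
    show "onorm (\<lambda>h. h *\<^sub>R f' x) \<le> B" if "x \<in> {a..b}" for x
    proof (rule onorm_le)
      fix h :: real
      show "norm (h *\<^sub>R f' x) \<le> B * norm h"
        using B[OF that] mult_left_mono[of "norm (f' x)" B "\<bar>h\<bar>"] by (simp add: mult.commute)
    qed
  qed (use assms in auto)
  thus ?thesis using assms by simp
qed

lemma dmfun_zero: "dmfun T 0 = 0"
  by (simp add: dmfun_def mexp_zero[simplified])

lemma mfun_zero: "mfun T 0 = 0"
  by (simp add: mfun_def mexp_zero[simplified])

lemma dmfun_deriv:
  assumes inv: "invertible (T::real^'n^'n)"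
  shows "((\<lambda>v. dmfun T v) has_vector_derivative mexp (- (v *\<^sub>R matrix_inv T))) (at v within S)"
proof -
  have TA: "T ** matrix_inv T = mat 1" using minv[OF inv] by auto
  have "((\<lambda>v. T ** (mat 1 - mexp (- (v *\<^sub>R matrix_inv T)))) has_vector_derivative
          T ** (0 - - (matrix_inv T ** mexp (- (v *\<^sub>R matrix_inv T))))) (at v within S)"
    by (rule bounded_linear.has_vector_derivative[OF bl_mm_left])
       (intro has_vector_derivative_diff has_vector_derivative_const mexp_deriv)
  thus ?thesis by (simp add: dmfun_def matrix_mul_assoc TA)
qed

lemma dmfun_bound:
  assumes inv: "invertible (T::real^'n^'n)" and u: "0 \<le> u"
    and B: "\<And>v. 0 \<le> v \<Longrightarrow> mnorm (mexp (- (v *\<^sub>R matrix_inv T))) \<le> Ce"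
  shows "norm (dmfun T u *v w) \<le> Ce * norm w * u"
proof -
  have "norm (dmfun T u *v w - dmfun T 0 *v w) \<le> (Ce * norm w) * (u - 0)"
  proof (rule vd_bound[where f'="\<lambda>v. mexp (- (v *\<^sub>R matrix_inv T)) *v w"])
    show "((\<lambda>v. dmfun T v *v w) has_vector_derivative mexp (- (v *\<^sub>R matrix_inv T)) *v w) (at v within {0..u})" for v
      using bounded_linear.has_vector_derivative[OF bounded_bilinear.bounded_linear_left[OF bb_mv] dmfun_deriv[OF inv]] .
    show "norm (mexp (- (v *\<^sub>R matrix_inv T)) *v w) \<le> Ce * norm w" if "v \<in> {0..u}" for v
      using mnorm_apply[of "mexp (- (v *\<^sub>R matrix_inv T))" w] B[of v] that
      by (meson atLeastAtMost_iff mult_right_mono norm_ge_zero order_trans)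
  qed (use u in auto)
  thus ?thesis by (simp add: dmfun_zero)
qed


lemma chain_vd:
  assumes f: "(f has_vector_derivative v) (at x within s)"
    and g: "(g has_derivative g') (at (f x))"
  shows "((\<lambda>x. g (f x)) has_vector_derivative g' v) (at x within s)"
proof -
  have bl: "bounded_linear g'" using g by (rule has_derivative_bounded_linear)
  have "((\<lambda>x. g (f x)) has_derivative (\<lambda>h. g' (h *\<^sub>R v))) (at x within s)"
    using has_derivative_compose[OF f[unfolded has_vector_derivative_def] g] .
  moreover have "(\<lambda>h. g' (h *\<^sub>R v)) = (\<lambda>h. h *\<^sub>R g' v)"
    using linear_simps(5)[OF bl] by auto
  ultimately show ?thesis by (simp add: has_vector_derivative_def)
qed

lemma T_nonneg:
  assumes "T 0 = (0::real)" "\<And>n. T n < T (Suc n)"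
  shows "0 \<le> T n"
  by (induct n) (use assms in \<open>auto intro: order_trans less_imp_le\<close>)

lemma T_mono:
  assumes "\<And>n. (T::nat\<Rightarrow>real) n < T (Suc n)" "m \<le> n"
  shows "T m \<le> T n"
  using assms(2)
proof (induct n)
  case (Suc n) thus ?case using assms(1)[of n] by (cases "m = Suc n") (auto simp: le_Suc_eq)
qed simp

lemma interval_index:
  assumes T0: "T 0 = (0::real)" and inc: "\<And>n. T n < T (Suc n)"
    and lim: "filterlim T at_top sequentially" and t: "0 \<le> t"
  shows "\<exists>n. T n \<le> t \<and> t < T (Suc n)"
proof -
  have "\<forall>\<^sub>F m in sequentially. t + 1 \<le> T m"
    using lim by (simp add: filterlim_at_top)
  then obtain N where "\<forall>n\<ge>N. t + 1 \<le> T n" by (auto simp: eventually_sequentially)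
  hence m: "t < T N" by force
  define m0 where "m0 = (LEAST m. t < T m)"
  have m0: "t < T m0" unfolding m0_def by (rule LeastI[of _ N]) (rule m)
  have "m0 \<noteq> 0"
  proof
    assume "m0 = 0" with m0 T0 t show False by simp
  qed
  then obtain n where n: "m0 = Suc n" by (cases m0) auto
  have "\<not> t < T n" using not_less_Least[of n "\<lambda>m. t < T m"] n unfolding m0_def by auto
  thus ?thesis using m0 n by (intro exI[of _ n]) auto
qed

lemma cont_X:
  fixes X :: "real \<Rightarrow> 'a::real_normed_vector"
  assumes T0: "T 0 = (0::real)" and inc: "\<And>n. T n < T (Suc n)"
    and lim: "filterlim T at_top sequentially"
    and dX: "\<And>n t. t \<in> {T n..T (Suc n)} \<Longrightarrow> (X has_vector_derivative (v n)) (at t within {T n..T (Suc n)})"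
  shows "continuous_on {0..} X"
proof -
  have ci: "continuous_on {T n..T (Suc n)} X" for n
    using dX[of _ n] by (meson continuous_on_eq_continuous_within has_vector_derivative_continuous)
  have cn: "continuous_on {0..T n} X" for n
  proof (induct n)
    case 0 thus ?case using T0 by simp
  next
    case (Suc n)
    have "{0..T (Suc n)} = {0..T n} \<union> {T n..T (Suc n)}"
      using T_nonneg[of T n, OF T0 inc] inc[of n] by auto
    thus ?case using continuous_on_closed_Un[OF _ _ Suc ci[of n]] by simp
  qed
  show ?thesis
  proof (clarsimp simp: continuous_on_eq_continuous_within)
    fix t :: real assume t: "0 \<le> t"
    have "\<forall>\<^sub>F m in sequentially. t + 1 \<le> T m"
      using lim by (simp add: filterlim_at_top)
    then obtain N where "\<forall>n\<ge>N. t + 1 \<le> T n" by (auto simp: eventually_sequentially)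
  hence m: "t < T N" by force
    have "continuous (at t within {0..T N}) X"
      using cn[of N] t m by (simp add: continuous_on_eq_continuous_within)
    moreover have "at t within {0..} = at t within {0..T N}"
      by (rule at_within_nhd[where S="{..<T N}"]) (use m in auto)
    ultimately show "continuous (at t within {0..}) X" by (simp add: continuous_within)
  qed
qed

lemma right_deriv:
  fixes X :: "real \<Rightarrow> 'a::real_normed_vector"
  assumes T0: "T 0 = (0::real)" and inc: "\<And>n. T n < T (Suc n)"
    and lim: "filterlim T at_top sequentially"
    and dX: "\<And>n t. t \<in> {T n..T (Suc n)} \<Longrightarrow> (X has_vector_derivative (v n)) (at t within {T n..T (Suc n)})"
    and t: "0 \<le> t"
  shows "\<exists>n. T n \<le> t \<and> t < T (Suc n) \<and> (X has_vector_derivative (v n)) (at t within {t..})"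
proof -
  obtain n where n: "T n \<le> t" "t < T (Suc n)" using interval_index[OF T0 inc lim t] by auto
  have "(X has_vector_derivative (v n)) (at t within {t..T (Suc n)})"
    by (rule has_vector_derivative_within_subset[OF dX[of t n]]) (use n in auto)
  moreover have "at t within {t..T (Suc n)} = at t within {t..}"
    by (rule at_within_nhd[where S="{..<T (Suc n)}"]) (use n in auto)
  ultimately show ?thesis using n by auto
qed

lemma final_arith:
  fixes D th lm K1 K2 K3 x1 x2 x3 :: real
  assumes D: "0 \<le> D" and lm: "0 < lm" and Dth: "lm * D \<le> th"
    and K: "0 \<le> K1" "0 \<le> K2" "0 \<le> K3" and x: "0 \<le> x1" "0 \<le> x2" "0 \<le> x3"
  shows "K1 * x1 * D + K2 * x2 * D^2 + K3 * x3 * D^3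
         \<le> (K1/lm + K2/lm^2 + K3/lm^3) * (th^3 + th) * (x1 + x2 + x3)"
proof -
  have th0: "0 \<le> th" using D lm Dth by (meson mult_nonneg_nonneg less_imp_le order_trans)
  have Dle: "D \<le> th / lm" using Dth lm by (simp add: field_simps)
  define P where "P = th^3 + th"
  have P0: "0 \<le> P" using th0 by (simp add: P_def)
  have t1: "th \<le> P" using th0 by (simp add: P_def)
  have t2: "th^2 \<le> P"
  proof -
    have "0 \<le> th * (th - 1)^2" using th0 by simp
    hence "2 * th^2 \<le> th^3 + th" by (simp add: power2_eq_square power3_eq_cube algebra_simps)
    moreover have "th^2 \<le> 2 * th^2" by simp
    ultimately show ?thesis unfolding P_def by linarith
  qed
  have t3: "th^3 \<le> P" using th0 by (simp add: P_def)
  have D1: "D \<le> P / lm" using Dle t1 lm by (simp add: divide_right_mono order_trans)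
  have D2: "D^2 \<le> P / lm^2"
  proof -
    have "D^2 \<le> (th/lm)^2" using Dle D by (simp add: power_mono)
    also have "\<dots> = th^2 / lm^2" by (simp add: power_divide)
    also have "\<dots> \<le> P / lm^2" using t2 lm by (simp add: divide_right_mono)
    finally show ?thesis .
  qed
  have D3: "D^3 \<le> P / lm^3"
  proof -
    have "D^3 \<le> (th/lm)^3" using Dle D by (simp add: power_mono)
    also have "\<dots> = th^3 / lm^3" by (simp add: power_divide)
    also have "\<dots> \<le> P / lm^3" using t3 lm by (simp add: divide_right_mono)
    finally show ?thesis .
  qed
  have "K1 * x1 * D \<le> K1 * x1 * (P / lm)" using D1 K x by (intro mult_left_mono) auto
  moreover have "K2 * x2 * D^2 \<le> K2 * x2 * (P / lm^2)" using D2 K x by (intro mult_left_mono) auto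
  moreover have "K3 * x3 * D^3 \<le> K3 * x3 * (P / lm^3)" using D3 K x by (intro mult_left_mono) auto
  moreover have "K1 * x1 * (P / lm) + K2 * x2 * (P / lm^2) + K3 * x3 * (P / lm^3)
       \<le> (K1/lm + K2/lm^2 + K3/lm^3) * P * (x1 + x2 + x3)"
  proof -
    have a: "0 \<le> K1/lm * P" "0 \<le> K2/lm^2 * P" "0 \<le> K3/lm^3 * P" using K lm P0 by auto
    have "K1 * x1 * (P / lm) + K2 * x2 * (P / lm^2) + K3 * x3 * (P / lm^3)
       = (K1/lm * P) * x1 + (K2/lm^2 * P) * x2 + (K3/lm^3 * P) * x3" by (simp add: field_simps)
    also have "\<dots> \<le> (K1/lm * P) * (x1+x2+x3) + (K2/lm^2 * P) * (x1+x2+x3) + (K3/lm^3 * P) * (x1+x2+x3)"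
      using a x by (intro add_mono mult_left_mono) auto
    also have "\<dots> = (K1/lm + K2/lm^2 + K3/lm^3) * P * (x1 + x2 + x3)" by (simp add: algebra_simps)
    finally show ?thesis .
  qed
  ultimately show ?thesis unfolding P_def by linarith
qed


lemma d2_bound:
  fixes D2S :: "'a::euclidean_space \<Rightarrow> real^'d \<Rightarrow> real^'d^'n"
  assumes bl: "\<And>x. bounded_linear (D2S x)"
    and bdd: "\<exists>B. \<forall>x. onorm (\<lambda>h. opnorm (D2S x h)) \<le> B"
  shows "opnorm (D2S x h) \<le> (SUP x. onorm (\<lambda>h. opnorm (D2S x h))) * norm h"
proof -
  let ?g = "\<lambda>h. opnorm (D2S x h)"
  obtain K where K0: "0 \<le> K" and K: "\<And>h. norm (D2S x h) \<le> norm h * K"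
    using bounded_linear.nonneg_bounded[OF bl[of x]] by auto
  define c where "c = real CARD('n) * real CARD('d) * K"
  have c0: "0 \<le> c" using K0 by (simp add: c_def)
  have gb: "?g h \<le> c * norm h" for h
  proof -
    have "?g h \<le> real CARD('n) * real CARD('d) * norm (D2S x h)"
      unfolding opnorm_mnorm by (rule mnorm_le_vnorm)
    also have "\<dots> \<le> real CARD('n) * real CARD('d) * (norm h * K)"
      by (intro mult_left_mono K) simp
    finally show ?thesis by (simp add: c_def ac_simps)
  qed
  have g0: "0 \<le> ?g h" for h unfolding opnorm_mnorm by (rule mnorm_ge0)
  have bddr: "bdd_above (range (\<lambda>h. norm (?g h) / norm h))"
  proof (rule bdd_aboveI2[where M=c])
    fix h :: "real^'d"
    show "norm (opnorm (D2S x h)) / norm h \<le> c"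
    proof (cases "h = 0")
      case True thus ?thesis using c0 by simp
    next
      case False
      thus ?thesis using gb[of h] g0[of h] by (simp add: divide_le_eq)
    qed
  qed
  have o1: "onorm ?g \<le> (SUP x. onorm (\<lambda>h. opnorm (D2S x h)))"
  proof -
    obtain B where B: "\<forall>x. onorm (\<lambda>h. opnorm (D2S x h)) \<le> B" using bdd by auto
    have "bdd_above (range (\<lambda>x. onorm (\<lambda>h. opnorm (D2S x h))))"
      using B by (auto intro: bdd_aboveI2)
    thus ?thesis by (rule cSUP_upper[rotated]) simp
  qed
  show ?thesis
  proof (cases "h = 0")
    case True
    have "D2S x h = 0" using True linear_simps(3)[OF bl[of x]] by simp
    moreover have "0 \<le> (SUP x. onorm (\<lambda>h. opnorm (D2S x h)))"
    proof -
      have "norm (?g 0) / norm (0::real^'d) \<le> onorm ?g"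
        unfolding onorm_def by (rule cSUP_upper[OF _ bddr]) simp
      thus ?thesis using o1 by simp
    qed
    moreover have "mnorm (0::real^'d^'n) = 0" by (simp add: mnorm_eq0)
    ultimately show ?thesis using True by (simp add: opnorm_mnorm)
  next
    case False
    have "norm (?g h) / norm h \<le> onorm ?g"
      unfolding onorm_def by (rule cSUP_upper[OF _ bddr]) simp
    hence "?g h / norm h \<le> (SUP x. onorm (\<lambda>h. opnorm (D2S x h)))" using o1 g0[of h] by simp
    thus ?thesis using False by (simp add: divide_le_eq mult.commute)
  qed
qed




theorem mainTheorem6:
  fixes S :: "real^'d \<Rightarrow> real^'n"
    and DS :: "real^'d \<Rightarrow> real^'d^'n"
    and D2S :: "real^'d \<Rightarrow> real^'d \<Rightarrow> real^'d^'n"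
    and lam :: "real^'n \<Rightarrow> real"
    and l0 lmin lmax clam cF \<delta> C0 C0' :: real
    and b :: "real^'n"
    and k :: nat
    and E :: "real set"
    and \<tau> :: "real \<Rightarrow> real^'n^'n"
    and F :: "real \<Rightarrow> real^'n \<Rightarrow> real^'n \<Rightarrow> real^'n"
  assumes E_pos: "E \<subseteq> {0<..}"
    and S_smooth: "smooth_map S" and S_bdd: "bounded (range S)"
    and S_deriv: "\<And>x. (S has_derivative (\<lambda>h. DS x *v h)) (at x)"
    and DS_bdd: "\<exists>B. \<forall>x. opnorm (DS x) \<le> B"
    and DS_deriv: "\<And>x. (DS has_derivative D2S x) (at x)"
    and D2S_bdd: "\<exists>B. \<forall>x. onorm (\<lambda>h. opnorm (D2S x h)) \<le> B"
    and lam_smooth: "smooth_map lam"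
    and lam_min_pos: "0 < lmin"
    and lam_bounds: "\<And>z. lmin \<le> lam z \<and> lam z \<le> lmax"
    and k_ge: "k \<ge> 2"
    and clam_nonneg: "clam \<ge> 0"
    and lam_expansion: "\<exists>L. \<forall>z. \<bar>lam z - (l0 - b \<bullet> z)\<bar> \<le> clam * L * norm z ^ k"
    and \<delta>_gt: "\<delta> > 1 / real k"
    and cF_nonneg: "cF \<ge> 0"
    and \<tau>_inv: "\<And>\<epsilon>. \<epsilon> \<in> E \<Longrightarrow> invertible (\<tau> \<epsilon>)"
    and A1: "\<exists>L. \<forall>\<epsilon>\<in>E. \<forall>y s.
               norm (F \<epsilon> y s - (- (matrix_inv (\<tau> \<epsilon>) *v (y - s))))
                 \<le> \<epsilon> powr (1 - \<delta>) * cF * L * norm (s - y) ^ 2"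
    and A2: "\<exists>C>0. \<forall>\<epsilon>\<in>E. \<forall>t\<ge>0.
               opnorm (mexp (- (t *\<^sub>R matrix_inv (\<tau> \<epsilon>)))) \<le> C * exp (- t * \<epsilon> powr (1 - \<delta>) / C)"
    and A3: "\<exists>C. \<forall>\<epsilon>\<in>E. \<forall>t\<ge>0.
               opnorm ((t *\<^sub>R matrix_inv (\<tau> \<epsilon>)) ** mexp (- (t *\<^sub>R matrix_inv (\<tau> \<epsilon>)))) \<le> C / \<epsilon>"
    and A4: "\<forall>C1 C0. \<exists>C2. \<forall>\<epsilon>\<in>E. \<forall>(Sp :: real \<Rightarrow> real^'n) (Yp :: real \<Rightarrow> real^'n).
               continuous_on {0..} Sp \<and>
               (\<forall>t\<ge>0. \<exists>v. (Sp has_vector_derivative v) (at t within {t..}) \<and> norm v \<le> C1 * \<epsilon>) \<and>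
               norm (Sp 0 - Yp 0) \<le> C0 * \<epsilon> powr \<delta> \<and>
               (\<forall>t\<ge>0. (Yp has_vector_derivative F \<epsilon> (Yp t) (Sp t)) (at t within {0..}))
               \<longrightarrow> (\<forall>t\<ge>0. norm (Yp t - Sp t) \<le> C2 * \<epsilon> powr \<delta>)"
  shows "\<exists>C. \<forall>\<epsilon>\<in>E. \<forall>th Vs T (X :: real \<Rightarrow> real^'d) (Y :: real \<Rightarrow> real^'n).
           is_path \<epsilon> S (F \<epsilon>) lam th Vs T X Y \<and>
           norm (S (X 0) - Y 0) \<le> C0 * \<epsilon> powr \<delta> \<and>
           norm (matrix_inv (\<tau> \<epsilon>) *v (S (X 0) - Y 0)) \<le> C0'
           \<longrightarrow> (\<forall>n.
              let cS = (SUP x. onorm (\<lambda>h. opnorm (D2S x h)));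
                  r = clam * \<epsilon> powr (real k * \<delta>) + cF * \<epsilon> powr (1 + \<delta>) + cS * \<epsilon>\<^sup>2;
                  \<Delta>T = T (Suc n) - T n;
                  Zn = S (X (T n)) - Y (T n)
              in \<bar>th (Suc n) - (l0 * \<Delta>T - b \<bullet> (dmfun (\<tau> \<epsilon>) \<Delta>T *v Zn)
                     - \<epsilon> * (b \<bullet> (mfun (\<tau> \<epsilon>) \<Delta>T *v (DS (X (T n)) *v Vs n))))\<bar>
                 \<le> C * (th (Suc n) ^ 3 + th (Suc n)) * r)"
proof -
  obtain B0 where B0: "\<And>x. opnorm (DS x) \<le> B0" using DS_bdd by auto
  define B where "B = max B0 0"
  have B: "\<And>x. opnorm (DS x) \<le> B" using B0 unfolding B_def by (meson max.coboundedI1)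
  obtain L1 where L1: "\<forall>\<epsilon>\<in>E. \<forall>y s.
               norm (F \<epsilon> y s - (- (matrix_inv (\<tau> \<epsilon>) *v (y - s))))
                 \<le> \<epsilon> powr (1 - \<delta>) * cF * L1 * norm (s - y) ^ 2" using A1 by auto
  obtain Ce where Ce0: "Ce > 0" and Ce: "\<forall>\<epsilon>\<in>E. \<forall>t\<ge>0.
               opnorm (mexp (- (t *\<^sub>R matrix_inv (\<tau> \<epsilon>)))) \<le> Ce * exp (- t * \<epsilon> powr (1 - \<delta>) / Ce)"
    using A2 by auto
  obtain C2 where C2: "\<forall>\<epsilon>\<in>E. \<forall>(Sp :: real \<Rightarrow> real^'n) (Yp :: real \<Rightarrow> real^'n).
               continuous_on {0..} Sp \<and>
               (\<forall>t\<ge>0. \<exists>v. (Sp has_vector_derivative v) (at t within {t..}) \<and> norm v \<le> B * \<epsilon>) \<and>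
               norm (Sp 0 - Yp 0) \<le> C0 * \<epsilon> powr \<delta> \<and>
               (\<forall>t\<ge>0. (Yp has_vector_derivative F \<epsilon> (Yp t) (Sp t)) (at t within {0..}))
               \<longrightarrow> (\<forall>t\<ge>0. norm (Yp t - Sp t) \<le> C2 * \<epsilon> powr \<delta>)"
    using A4 by blast
  obtain L2 where L2: "\<And>z. \<bar>lam z - (l0 - b \<bullet> z)\<bar> \<le> clam * L2 * norm z ^ k" using lam_expansion by auto
  define cS where "cS = (SUP x. onorm (\<lambda>h. opnorm (D2S x h)))"
  have blD2: "\<And>x. bounded_linear (D2S x)" using DS_deriv has_derivative_bounded_linear by blast
  have d2: "\<And>x h. opnorm (D2S x h) \<le> cS * norm h"
    unfolding cS_def by (rule d2_bound[OF blD2 D2S_bdd])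
  have cS0: "0 \<le> cS"
  proof -
    have ne: "(1::real^'d) \<noteq> 0" by (simp add: vec_eq_iff)
    have "0 \<le> opnorm (D2S undefined (1::real^'d))" unfolding opnorm_mnorm by (rule mnorm_ge0)
    hence "0 \<le> cS * norm (1::real^'d)" using d2 order_trans by blast
    thus ?thesis using ne by (simp add: zero_le_mult_iff)
  qed
  define C2p where "C2p = \<bar>C2\<bar>"
  define K1 where "K1 = \<bar>L2\<bar> * C2p ^ k"
  define K2 where "K2 = norm b * Ce * \<bar>L1\<bar> * C2p ^ 2"
  define K3 where "K3 = norm b * Ce"
  define CC where "CC = K1 / lmin + K2 / lmin ^ 2 + K3 / lmin ^ 3"
  show ?thesis
  proof (rule exI[of _ CC], intro ballI allI impI)
    fix \<epsilon> th Vs T n and X :: "real \<Rightarrow> real^'d" and Y :: "real \<Rightarrow> real^'n"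
    assume \<epsilon>E: "\<epsilon> \<in> E"
    assume H: "is_path \<epsilon> S (F \<epsilon>) lam th Vs T X Y \<and>
           norm (S (X 0) - Y 0) \<le> C0 * \<epsilon> powr \<delta> \<and>
           norm (matrix_inv (\<tau> \<epsilon>) *v (S (X 0) - Y 0)) \<le> C0'"
    have \<epsilon>0: "0 < \<epsilon>" using E_pos \<epsilon>E by auto
    have T0: "T 0 = 0" and lim: "filterlim T at_top sequentially"
      and Vn: "\<And>n. norm (Vs n) = 1" and inc: "\<And>n. T n < T (Suc n)"
      and dX: "\<And>n t. t \<in> {T n..T (Suc n)} \<Longrightarrow> (X has_vector_derivative (\<epsilon> *\<^sub>R Vs n)) (at t within {T n..T (Suc n)})"
      and dY: "\<And>t. t \<ge> 0 \<Longrightarrow> (Y has_vector_derivative F \<epsilon> (Y t) (S (X t))) (at t within {0..})"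
      and integ: "\<And>n. ((\<lambda>t. lam (S (X t) - Y t)) has_integral th (Suc n)) {T n..T (Suc n)}"
      using H unfolding is_path_def by auto
    have init: "norm (S (X 0) - Y 0) \<le> C0 * \<epsilon> powr \<delta>" using H by auto
    have contS: "continuous_on UNIV S"
      using S_deriv by (meson continuous_at_imp_continuous_on has_derivative_continuous)
    have contSX: "continuous_on {0..} (\<lambda>t. S (X t))"
      using continuous_on_compose2[OF contS cont_X[OF T0 inc lim dX]] by simp
    have rd: "\<exists>v. ((\<lambda>t. S (X t)) has_vector_derivative v) (at t within {t..}) \<and> norm v \<le> B * \<epsilon>"
      if t: "t \<ge> 0" for t
    proof -
      obtain m where m: "(X has_vector_derivative (\<epsilon> *\<^sub>R Vs m)) (at t within {t..})"
        using right_deriv[OF T0 inc lim dX t] by auto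
      have "((\<lambda>t. S (X t)) has_vector_derivative DS (X t) *v (\<epsilon> *\<^sub>R Vs m)) (at t within {t..})"
        by (rule chain_vd[OF m S_deriv])
      moreover have "norm (DS (X t) *v (\<epsilon> *\<^sub>R Vs m)) \<le> B * \<epsilon>"
      proof -
        have "norm (DS (X t) *v (\<epsilon> *\<^sub>R Vs m)) \<le> mnorm (DS (X t)) * norm (\<epsilon> *\<^sub>R Vs m)" by (rule mnorm_apply)
        also have "\<dots> = mnorm (DS (X t)) * \<epsilon>" using Vn[of m] \<epsilon>0 by simp
        also have "\<dots> \<le> B * \<epsilon>" using B[of "X t"] \<epsilon>0 by (simp add: opnorm_mnorm)
        finally show ?thesis .
      qed
      ultimately show ?thesis by blast
    qed
    have Zb0: "norm (Y t - S (X t)) \<le> C2 * \<epsilon> powr \<delta>" if "t \<ge> 0" for t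
      using C2[rule_format, OF \<epsilon>E, of "\<lambda>t. S (X t)" Y] contSX rd init dY that by auto
    have Zb: "norm (S (X t) - Y t) \<le> C2p * \<epsilon> powr \<delta>" if "t \<ge> 0" for t
    proof -
      have "C2 * \<epsilon> powr \<delta> \<le> C2p * \<epsilon> powr \<delta>" unfolding C2p_def by (intro mult_right_mono) auto
      thus ?thesis using Zb0[OF that] by (simp add: norm_minus_commute)
    qed
    define a where "a = T n"
    define t1 where "t1 = T (Suc n)"
    have a0: "0 \<le> a" unfolding a_def by (rule T_nonneg[OF T0 inc])
    have at1: "a \<le> t1" using inc[of n] unfolding a_def t1_def by simp
    define V where "V = Vs n"
    define P where "P = DS (X a)"
    define W where "W = P *v V"
    define A where "A = matrix_inv (\<tau> \<epsilon>)"
    have inv: "invertible (\<tau> \<epsilon>)" by (rule \<tau>_inv[OF \<epsilon>E])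
    define Z where "Z s = S (X s) - Y s" for s
    define N where "N s = F \<epsilon> (Y s) (S (X s)) - A *v Z s" for s
    define G where "G s = DS (X s) *v (\<epsilon> *\<^sub>R V) - N s" for s
    have dXn: "\<And>s. s \<in> {a..t1} \<Longrightarrow> (X has_vector_derivative (\<epsilon> *\<^sub>R V)) (at s within {a..t1})"
      using dX[of _ n] unfolding a_def t1_def V_def by auto
    have dZ: "(Z has_vector_derivative (G s - A *v Z s)) (at s within {a..t1})" if s: "s \<in> {a..t1}" for s
    proof -
      have d1: "((\<lambda>s. S (X s)) has_vector_derivative DS (X s) *v (\<epsilon> *\<^sub>R V)) (at s within {a..t1})"
        by (rule chain_vd[OF dXn[OF s] S_deriv])
      have d2': "(Y has_vector_derivative F \<epsilon> (Y s) (S (X s))) (at s within {a..t1})"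
        by (rule has_vector_derivative_within_subset[OF dY]) (use s a0 in auto)
      have "(Z has_vector_derivative (DS (X s) *v (\<epsilon> *\<^sub>R V) - F \<epsilon> (Y s) (S (X s)))) (at s within {a..t1})"
        unfolding Z_def[abs_def] by (rule has_vector_derivative_diff[OF d1 d2'])
      moreover have "G s - A *v Z s = DS (X s) *v (\<epsilon> *\<^sub>R V) - F \<epsilon> (Y s) (S (X s))"
        by (simp add: G_def N_def)
      ultimately show ?thesis by simp
    qed
    define \<Phi> where "\<Phi> s = b \<bullet> (dmfun (\<tau> \<epsilon>) (t1 - s) *v Z s) + \<epsilon> * (b \<bullet> (mfun (\<tau> \<epsilon>) (t1 - s) *v W))" for s
    define \<Phi>' where "\<Phi>' s = - (b \<bullet> Z s) + b \<bullet> (dmfun (\<tau> \<epsilon>) (t1 - s) *v (G s - \<epsilon> *\<^sub>R W))" for s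
    have dPhi: "(\<Phi> has_vector_derivative \<Phi>' s) (at s within {a..t1})" if "s \<in> {a..t1}" for s
      unfolding \<Phi>_def[abs_def] \<Phi>'_def
      by (rule phi_deriv[where G=G and Z=Z and s=s, OF inv dZ[OF that, unfolded A_def]])
    have iPhi: "(\<Phi>' has_integral (\<Phi> t1 - \<Phi> a)) {a..t1}"
      by (rule fundamental_theorem_of_calculus[OF at1 dPhi])
    have Phi1: "\<Phi> t1 = 0" by (simp add: \<Phi>_def dmfun_zero mfun_zero)
    have ilam: "((\<lambda>s. lam (Z s)) has_integral th (Suc n)) {a..t1}"
      using integ[of n] unfolding Z_def a_def t1_def .
    have icon: "((\<lambda>s. l0) has_integral l0 * (t1 - a)) {a..t1}"
      using has_integral_const_real[of l0 a t1] at1 by (simp add: mult.commute)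
    have iq: "((\<lambda>s. lam (Z s) - l0 - \<Phi>' s) has_integral (th (Suc n) - l0 * (t1 - a) - (\<Phi> t1 - \<Phi> a))) {a..t1}"
      by (intro has_integral_diff ilam icon iPhi)
    define x1 where "x1 = clam * \<epsilon> powr (real k * \<delta>)"
    define x2 where "x2 = cF * \<epsilon> powr (1 + \<delta>)"
    define x3 where "x3 = cS * \<epsilon>\<^sup>2"
    define \<Delta> where "\<Delta> = t1 - a"
    define Bq where "Bq = K1 * x1 + norm b * Ce * (cS * \<epsilon>\<^sup>2 * \<Delta> + \<bar>L1\<bar> * C2p ^ 2 * x2) * \<Delta>"
    have Ce_b: "mnorm (mexp (- (v *\<^sub>R matrix_inv (\<tau> \<epsilon>)))) \<le> Ce" if "0 \<le> v" for v
    proof -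
      have "mnorm (mexp (- (v *\<^sub>R matrix_inv (\<tau> \<epsilon>)))) \<le> Ce * exp (- v * \<epsilon> powr (1 - \<delta>) / Ce)"
        using Ce \<epsilon>E that by (simp add: opnorm_mnorm)
      also have "\<dots> \<le> Ce * 1"
        using Ce0 that \<epsilon>0 by (intro mult_left_mono) (auto simp: divide_nonpos_pos mult_nonpos_nonneg)
      finally show ?thesis by simp
    qed
    have C2p0: "0 \<le> C2p" unfolding C2p_def by simp
    have qb: "norm (lam (Z s) - l0 - \<Phi>' s) \<le> Bq" if s: "s \<in> {a..t1}" for s
    proof -
      have s0: "0 \<le> s" using s a0 by auto
      have Zs: "norm (Z s) \<le> C2p * \<epsilon> powr \<delta>" unfolding Z_def by (rule Zb[OF s0])
      have e1: "\<bar>lam (Z s) - (l0 - b \<bullet> Z s)\<bar> \<le> K1 * x1"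
      proof -
        have "\<bar>lam (Z s) - (l0 - b \<bullet> Z s)\<bar> \<le> clam * L2 * norm (Z s) ^ k" by (rule L2)
        also have "\<dots> \<le> clam * \<bar>L2\<bar> * norm (Z s) ^ k"
          using clam_nonneg by (intro mult_right_mono mult_left_mono) auto
        also have "\<dots> \<le> clam * \<bar>L2\<bar> * (C2p * \<epsilon> powr \<delta>) ^ k"
          using clam_nonneg by (intro mult_left_mono power_mono Zs) auto
        also have "(C2p * \<epsilon> powr \<delta>) ^ k = C2p ^ k * \<epsilon> powr (real k * \<delta>)"
          using \<epsilon>0 by (simp add: power_mult_distrib powr_power)
        finally show ?thesis by (simp add: K1_def x1_def ac_simps)
      qed
      have eN: "norm (N s) \<le> \<bar>L1\<bar> * C2p ^ 2 * x2"
      proof -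
        have "norm (N s) \<le> \<epsilon> powr (1 - \<delta>) * cF * L1 * norm (Z s) ^ 2"
          using L1[rule_format, OF \<epsilon>E, of "Y s" "S (X s)"]
          by (simp add: N_def Z_def A_def matrix_vector_mult_diff_distrib)
        also have "\<dots> \<le> \<epsilon> powr (1 - \<delta>) * cF * \<bar>L1\<bar> * norm (Z s) ^ 2"
          using cF_nonneg by (intro mult_right_mono mult_left_mono) auto
        also have "\<dots> \<le> \<epsilon> powr (1 - \<delta>) * cF * \<bar>L1\<bar> * (C2p * \<epsilon> powr \<delta>) ^ 2"
          using cF_nonneg by (intro mult_left_mono power_mono Zs) auto
        also have "\<epsilon> powr (1 - \<delta>) * (\<epsilon> powr \<delta>) ^ 2 = \<epsilon> powr (1 + \<delta>)"
        proof -
          have "\<epsilon> powr ((1 - \<delta>) + \<delta> + \<delta>) = \<epsilon> powr (1 - \<delta>) * \<epsilon> powr \<delta> * \<epsilon> powr \<delta>"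
            by (simp only: powr_add)
          moreover have "(1 - \<delta>) + \<delta> + \<delta> = 1 + \<delta>" by simp
          ultimately show ?thesis by (simp add: power2_eq_square mult.assoc)
        qed
        hence "\<epsilon> powr (1 - \<delta>) * cF * \<bar>L1\<bar> * (C2p * \<epsilon> powr \<delta>) ^ 2 = \<bar>L1\<bar> * C2p ^ 2 * x2"
          by (simp add: x2_def power_mult_distrib ac_simps)
        finally show ?thesis .
      qed
      have eD: "norm (DS (X s) *v V - P *v V) \<le> cS * \<epsilon> * (s - a)"
      proof -
        have "norm (DS (X s) *v V - DS (X a) *v V) \<le> (cS * \<epsilon>) * (s - a)"
        proof (rule vd_bound[where f'="\<lambda>u. D2S (X u) (\<epsilon> *\<^sub>R V) *v V"])
          show "a \<le> s" using s by auto
          fix u assume u: "u \<in> {a..s}"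
          have "(X has_vector_derivative (\<epsilon> *\<^sub>R V)) (at u within {a..s})"
            by (rule has_vector_derivative_within_subset[OF dXn]) (use u s in auto)
          from chain_vd[OF this DS_deriv]
          have "((\<lambda>u. DS (X u)) has_vector_derivative D2S (X u) (\<epsilon> *\<^sub>R V)) (at u within {a..s})" .
          from bounded_linear.has_vector_derivative[OF bounded_bilinear.bounded_linear_left[OF bb_mv] this]
          show "((\<lambda>u. DS (X u) *v V) has_vector_derivative D2S (X u) (\<epsilon> *\<^sub>R V) *v V) (at u within {a..s})" .
          have "norm (D2S (X u) (\<epsilon> *\<^sub>R V) *v V) \<le> mnorm (D2S (X u) (\<epsilon> *\<^sub>R V)) * norm V" by (rule mnorm_apply)
          also have "\<dots> \<le> cS * norm (\<epsilon> *\<^sub>R V) * norm V"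
            using d2[of "X u" "\<epsilon> *\<^sub>R V"] by (intro mult_right_mono) (auto simp: opnorm_mnorm)
          also have "\<dots> = cS * \<epsilon>" using Vn[of n] \<epsilon>0 by (simp add: V_def)
          finally show "norm (D2S (X u) (\<epsilon> *\<^sub>R V) *v V) \<le> cS * \<epsilon>" .
        qed
        thus ?thesis by (simp add: P_def)
      qed
      define w where "w = G s - \<epsilon> *\<^sub>R W"
      have w_eq: "w = \<epsilon> *\<^sub>R (DS (X s) *v V - P *v V) - N s"
        by (simp add: w_def G_def W_def matrix_vector_mult_scaleR scaleR_diff_right)
      have nw: "norm w \<le> \<epsilon> * (cS * \<epsilon> * \<Delta>) + \<bar>L1\<bar> * C2p ^ 2 * x2"
      proof -
        have "norm w \<le> norm (\<epsilon> *\<^sub>R (DS (X s) *v V - P *v V)) + norm (N s)"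
          unfolding w_eq by (rule norm_triangle_ineq4)
        also have "norm (\<epsilon> *\<^sub>R (DS (X s) *v V - P *v V)) \<le> \<epsilon> * (cS * \<epsilon> * \<Delta>)"
        proof -
          have "cS * \<epsilon> * (s - a) \<le> cS * \<epsilon> * \<Delta>"
            using s cS0 \<epsilon>0 by (intro mult_left_mono) (auto simp: \<Delta>_def)
          thus ?thesis using eD \<epsilon>0 by (simp add: mult_left_mono)
        qed
        finally show ?thesis using eN by linarith
      qed
      have e2: "\<bar>b \<bullet> (dmfun (\<tau> \<epsilon>) (t1 - s) *v w)\<bar> \<le> norm b * Ce * (cS * \<epsilon>\<^sup>2 * \<Delta> + \<bar>L1\<bar> * C2p ^ 2 * x2) * \<Delta>"
      proof -
        have i1: "\<bar>b \<bullet> (dmfun (\<tau> \<epsilon>) (t1 - s) *v w)\<bar> \<le> norm b * norm (dmfun (\<tau> \<epsilon>) (t1 - s) *v w)"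
          by (rule Cauchy_Schwarz_ineq2)
        have i2: "norm (dmfun (\<tau> \<epsilon>) (t1 - s) *v w) \<le> Ce * norm w * (t1 - s)"
          by (rule dmfun_bound[OF inv _ Ce_b]) (use s in auto)
        have i3: "Ce * norm w * (t1 - s) \<le> Ce * (\<epsilon> * (cS * \<epsilon> * \<Delta>) + \<bar>L1\<bar> * C2p ^ 2 * x2) * \<Delta>"
        proof -
          have "0 \<le> \<epsilon> * (cS * \<epsilon> * \<Delta>) + \<bar>L1\<bar> * C2p ^ 2 * x2"
            using nw norm_ge_zero[of w] by linarith
          thus ?thesis using Ce0 nw s by (intro mult_mono) (auto simp: \<Delta>_def)
        qed
        have "norm b * norm (dmfun (\<tau> \<epsilon>) (t1 - s) *v w) \<le> norm b * (Ce * (\<epsilon> * (cS * \<epsilon> * \<Delta>) + \<bar>L1\<bar> * C2p ^ 2 * x2) * \<Delta>)"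
          using i2 i3 by (intro mult_left_mono) auto
        moreover have "norm b * (Ce * (\<epsilon> * (cS * \<epsilon> * \<Delta>) + \<bar>L1\<bar> * C2p ^ 2 * x2) * \<Delta>)
            = norm b * Ce * (cS * \<epsilon>\<^sup>2 * \<Delta> + \<bar>L1\<bar> * C2p ^ 2 * x2) * \<Delta>"
          by (simp add: power2_eq_square ac_simps)
        ultimately show ?thesis using i1 by linarith
      qed
      have "lam (Z s) - l0 - \<Phi>' s = (lam (Z s) - (l0 - b \<bullet> Z s)) - b \<bullet> (dmfun (\<tau> \<epsilon>) (t1 - s) *v w)"
        by (simp add: \<Phi>'_def w_def)
      hence "norm (lam (Z s) - l0 - \<Phi>' s) \<le> \<bar>lam (Z s) - (l0 - b \<bullet> Z s)\<bar> + \<bar>b \<bullet> (dmfun (\<tau> \<epsilon>) (t1 - s) *v w)\<bar>"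
        by simp
      thus ?thesis using e1 e2 unfolding Bq_def by linarith
    qed
    have Bq0: "0 \<le> Bq" using qb[of a] at1 by (meson atLeastAtMost_iff norm_ge_zero order_trans order_refl)
    have Qb: "norm (th (Suc n) - l0 * (t1 - a) - (\<Phi> t1 - \<Phi> a)) \<le> Bq * (t1 - a)"
      using has_integral_bound_real[OF Bq0 finite.emptyI iq] qb at1 by auto
    have lmD: "lmin * \<Delta> \<le> th (Suc n)"
    proof -
      have "((\<lambda>s. lmin) has_integral lmin * (t1 - a)) {a..t1}"
        using has_integral_const_real[of lmin a t1] at1 by (simp add: mult.commute)
      from has_integral_le[OF this ilam] lam_bounds show ?thesis by (auto simp: \<Delta>_def)
    qed
    have fin: "K1 * x1 * \<Delta> + K2 * x2 * \<Delta>^2 + K3 * x3 * \<Delta>^3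
         \<le> CC * (th (Suc n) ^ 3 + th (Suc n)) * (x1 + x2 + x3)"
      unfolding CC_def
      by (rule final_arith) (use at1 lam_min_pos lmD Ce0 cS0 clam_nonneg cF_nonneg \<epsilon>0 C2p0 in
          \<open>auto simp: \<Delta>_def K1_def K2_def K3_def x1_def x2_def x3_def\<close>)
    have "Bq * (t1 - a) = K1 * x1 * \<Delta> + K2 * x2 * \<Delta>^2 + K3 * x3 * \<Delta>^3"
      using at1 by (simp add: Bq_def \<Delta>_def K2_def K3_def x3_def power2_eq_square power3_eq_cube algebra_simps)
    with Qb fin have main: "norm (th (Suc n) - l0 * (t1 - a) - (\<Phi> t1 - \<Phi> a)) \<le> CC * (th (Suc n) ^ 3 + th (Suc n)) * (x1 + x2 + x3)"
      by linarith
    have eqQ: "th (Suc n) - l0 * (t1 - a) - (\<Phi> t1 - \<Phi> a) =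
       th (Suc n) - (l0 * (T (Suc n) - T n) - b \<bullet> (dmfun (\<tau> \<epsilon>) (T (Suc n) - T n) *v (S (X (T n)) - Y (T n)))
                     - \<epsilon> * (b \<bullet> (mfun (\<tau> \<epsilon>) (T (Suc n) - T n) *v (DS (X (T n)) *v Vs n))))"
      by (simp add: dmfun_zero mfun_zero \<Phi>_def a_def t1_def Z_def W_def P_def V_def)
    show "let cS = (SUP x. onorm (\<lambda>h. opnorm (D2S x h)));
                  r = clam * \<epsilon> powr (real k * \<delta>) + cF * \<epsilon> powr (1 + \<delta>) + cS * \<epsilon>\<^sup>2;
                  \<Delta>T = T (Suc n) - T n;
                  Zn = S (X (T n)) - Y (T n)
              in \<bar>th (Suc n) - (l0 * \<Delta>T - b \<bullet> (dmfun (\<tau> \<epsilon>) \<Delta>T *v Zn)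
                     - \<epsilon> * (b \<bullet> (mfun (\<tau> \<epsilon>) \<Delta>T *v (DS (X (T n)) *v Vs n))))\<bar>
                 \<le> CC * (th (Suc n) ^ 3 + th (Suc n)) * r"
      using main unfolding eqQ Let_def cS_def[symmetric] x1_def x2_def x3_def by simp
  qed
qed


end
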